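(* Let $q$, $\lambda\in(0,\infty)$, $U_1,U_2,U_3$ be as in the context. (i) For any constants $\beta_2,\beta_3$, if $R$ denotes the third component of $\beta_2U_2+\beta_3U_3$, then for every $x_0>0$, \[\lim_{N\to\infty}\frac{\int_{x_0}^NR(x,\lambda)\,dx}{\int_{x_0}^NR_1(x,\lambda)\,dx}=0.\] (ii) If $U_1=\tilde a((u')^2,-2uu',u^2)^T+\tilde b(u'v',-(uv'+u'v),uv)^T+\tilde c((v')^2,-2vv',v^2)^T$, then $\tilde a(\lambda)>0$ and $\tilde c(\lambda)>0$ for all $\lambda\in(0,\infty)$.
   Context: $q(x)=\frac{q_0}{x^2}+\frac{q_1}{x}+\sum_{n\ge0}q_{n+2}x^n$, real coefficients, convergent on $(0,\infty)$, $q_0\ge-\tfrac14$, $q_0,q_1$ not both zero; for some $x_0>0$ either $q\in L_1(x_0,\infty)$, or $q'\in L_1(x_0,\infty)$, $q\in AC_{loc}[x_0,\infty)$ and $q\to0$ at $\infty$. Appell system: $(P,Q,R)'=M(P,Q,R)^T$, $M=\begin{pmatrix}0&\lambda-q&0\\-2&0&2(\lambda-q)\\0&-1&0\end{pmatrix}$; $U_1=(P_1,Q_1,R_1)^T$ is its unique solution with $\lim_{x\to\infty}U_1=(\sqrt\lambda,0,1/\sqrt\lambda)^T$. For fixed $c>0$, $\gamma(x)=\int_c^xdt/R_1(t,\lambda)$, $U_2=(P_1\cos2\gamma+(Q_1/R_1)\sin2\gamma-(2/R_1)\cos2\gamma,\ Q_1\cos2\gamma+2\sin2\gamma,\ R_1\cos2\gamma)^T$,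 $U_3=(P_1\sin2\gamma-(Q_1/R_1)\cos2\gamma-(2/R_1)\sin2\gamma,\ Q_1\sin2\gamma-2\cos2\gamma,\ R_1\sin2\gamma)^T$. For fixed $A>0$, $u,v$ solve $-y''+qy=\lambda y$ with $u(A)=1,u'(A)=0,v(A)=0,v'(A)=1$, and $\tilde a,\tilde b,\tilde c$ are real. *)

theory Defs
  imports "HOL-Analysis.Analysis"
begin

definition oint :: "real \<Rightarrow> real \<Rightarrow> (real \<Rightarrow> real) \<Rightarrow> real" where
  "oint a b f = (if a \<le> b then integral {a..b} f else - integral {b..a} f)"

end

theory Submission imports Defs "HOL-Real_Asymp.Real_Asymp" begin

lemma integral_deriv_at:
  fixes f :: "real \<Rightarrow> real"
  assumes "continuous_on {a..b} f" "a < x" "x < b"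
  shows "((\<lambda>y. integral {a..y} f) has_real_derivative f x) (at x)"
proof -
  have "((\<lambda>y. integral {a..y} f) has_real_derivative f x) (at x within {a..b})"
    using integral_has_real_derivative[OF assms(1)] assms by auto
  then have "((\<lambda>y. integral {a..y} f) has_real_derivative f x) (at x within {a<..<b})"
    by (rule DERIV_subset) auto
  moreover have "at x within {a<..<b} = at x" using assms by (intro at_within_open) auto
  ultimately show ?thesis by simp
qed

lemma appell_facts:
  fixes P Q R qq :: "real \<Rightarrow> real" and lam :: real
  assumes lam: "lam > 0"
    and dP: "\<forall>x>0. (P has_real_derivative (lam - qq x) * Q x) (at x)"
    and dQ: "\<forall>x>0. (Q has_real_derivative (- 2 * P x + 2 * (lam - qq x) * R x)) (at x)"
    and dR: "\<forall>x>0. (R has_real_derivative - Q x) (at x)"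
    and lP: "(P \<longlongrightarrow> sqrt lam) at_top"
    and lQ: "(Q \<longlongrightarrow> 0) at_top"
    and lR: "(R \<longlongrightarrow> 1 / sqrt lam) at_top"
  shows "\<forall>x>0. R x > 0 \<and> P x > 0"
proof -
  define \<phi> where "\<phi> x = 4 * P x * R x - (Q x)\<^sup>2" for x
  have d\<phi>: "(\<phi> has_real_derivative 0) (at x)" if "x > 0" for x
  proof -
    have "(\<phi> has_real_derivative
        4 * ((lam - qq x) * Q x) * R x + 4 * P x * (- Q x)
        - 2 * Q x * (- 2 * P x + 2 * (lam - qq x) * R x)) (at x)"
      unfolding \<phi>_def using dP dQ dR that
      by (auto intro!: derivative_eq_intros simp: power2_eq_square)
    then show ?thesis by (simp add: algebra_simps)
  qed
  have lim\<phi>: "(\<phi> \<longlongrightarrow> 4 * sqrt lam * (1 / sqrt lam) - 0\<^sup>2) at_top"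
    unfolding \<phi>_def by (intro tendsto_intros lP lQ lR)
  have "4 * sqrt lam * (1 / sqrt lam) - 0\<^sup>2 = (4::real)" using lam by simp
  with lim\<phi> have lim4: "(\<phi> \<longlongrightarrow> 4) at_top" by simp
  have phi4: "\<phi> x = 4" if "x > 0" for x
  proof -
    have "eventually (\<lambda>y. \<phi> x = \<phi> y) at_top"
      using eventually_gt_at_top[of x]
    proof eventually_elim
      case (elim y)
      have "continuous_on {x..y} \<phi>"
        using that by (intro continuous_at_imp_continuous_on ballI DERIV_isCont[OF d\<phi>]) auto
      then have "\<phi> y = \<phi> x"
        using that elim by (intro DERIV_isconst2[of x y \<phi> y]) (auto intro!: d\<phi>)
      then show ?case by simp
    qed
    then have "((\<lambda>y. \<phi> y) \<longlongrightarrow> \<phi> x) at_top"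
      by (rule Lim_transform_eventually[OF tendsto_const])
    then show ?thesis using lim4 tendsto_unique by force
  qed
  have Rnz: "R x \<noteq> 0" if "x > 0" for x
  proof
    assume "R x = 0"
    with phi4[OF that] have "- (Q x)\<^sup>2 = 4" unfolding \<phi>_def by simp
    then show False using zero_le_power2[of "Q x"] by linarith
  qed
  have Rpos: "R x > 0" if "x > 0" for x
  proof (rule ccontr)
    assume "\<not> R x > 0"
    with Rnz[OF that] have neg: "R x < 0" by simp
    have "eventually (\<lambda>y. R y > 0) at_top"
      using order_tendstoD(1)[OF lR, of 0] lam by simp
    then obtain N where N: "\<And>y. y \<ge> N \<Longrightarrow> R y > 0" by (auto simp: eventually_at_top_linorder)
    define y where "y = max N x"
    have "continuous_on {x..y} R"
      using that dR by (intro continuous_at_imp_continuous_on ballI) (meson DERIV_isCont atLeastAtMost_iff less_le_trans)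
    moreover have "R x \<le> 0" "0 \<le> R y" using neg N[of y] by (auto simp: y_def)
    ultimately obtain z where "x \<le> z" "z \<le> y" "R z = 0"
      using IVT'[of R x 0 y] by (auto simp: y_def)
    then show False using Rnz[of z] that by auto
  qed
  show ?thesis
  proof (intro allI impI conjI)
    fix x :: real assume x: "x > 0"
    show "R x > 0" using Rpos[OF x] .
    have "4 * P x * R x = 4 + (Q x)\<^sup>2" using phi4[OF x] unfolding \<phi>_def by simp
    then have "P x * R x > 0" using zero_le_power2[of "Q x"] by linarith
    then show "P x > 0" using Rpos[OF x] by (simp add: zero_less_mult_iff)
  qed
qed

lemma bnd_sc: "\<bar>b2 * sin t - b3 * cos t\<bar> \<le> \<bar>b2\<bar> + \<bar>b3::real\<bar>"
proof -
  have "\<bar>b2 * sin t\<bar> \<le> \<bar>b2\<bar>" by (simp add: abs_mult mult_left_le)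
  moreover have "\<bar>b3 * cos t\<bar> \<le> \<bar>b3\<bar>" by (simp add: abs_mult mult_left_le)
  ultimately show ?thesis by linarith
qed

lemma bnd_sc2: "\<bar>b2 * sin t\<bar> + \<bar>b3 * cos t\<bar> \<le> \<bar>b2\<bar> + \<bar>b3::real\<bar>"
proof -
  have "\<bar>b2 * sin t\<bar> \<le> \<bar>b2\<bar>" by (simp add: abs_mult mult_left_le)
  moreover have "\<bar>b3 * cos t\<bar> \<le> \<bar>b3\<bar>" by (simp add: abs_mult mult_left_le)
  ultimately show ?thesis by linarith
qed

lemma part_i:
  fixes R Q :: "real \<Rightarrow> real" and r c x0 b2 b3 :: real
  assumes Rpos: "\<forall>x>0. R x > 0"
    and dR: "\<forall>x>0. (R has_real_derivative - Q x) (at x)"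
    and lR: "(R \<longlongrightarrow> r) at_top" and r: "r > 0"
    and lQ: "(Q \<longlongrightarrow> 0) at_top" and c: "c > 0" and x0: "x0 > 0"
  shows "((\<lambda>N. integral {x0..N} (\<lambda>x. b2 * (R x * cos (2 * oint c x (\<lambda>t. 1 / R t)))
             + b3 * (R x * sin (2 * oint c x (\<lambda>t. 1 / R t)))) / integral {x0..N} R) \<longlongrightarrow> 0) at_top"
proof -
  define g where "g t = 1 / R t" for t
  define \<Gamma> where "\<Gamma> x = oint c x g" for x
  have contR: "isCont R x" if "x > 0" for x using dR that DERIV_isCont by blast
  have contg: "isCont g x" if "x > 0" for x
    unfolding g_def using contR[OF that] Rpos that by (auto intro!: continuous_intros)
  have con_on: "continuous_on {a..b} f" if "a > 0" "\<And>x. x > 0 \<Longrightarrow> isCont f x" for a b and f :: "real \<Rightarrow> real"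
    using that by (intro continuous_at_imp_continuous_on ballI) auto
  have d\<Gamma>: "(\<Gamma> has_real_derivative g x) (at x)" if x: "x > 0" for x
  proof -
    define e where "e = min c x / 2"
    define b where "b = max c x + 1"
    have e: "e > 0" "e < c" "e < x" using c x by (auto simp: e_def)
    have cg: "continuous_on {e..b} g" by (rule con_on[OF e(1) contg])
    define F where "F y = integral {e..y} g" for y
    have "(F has_real_derivative g x) (at x)"
      unfolding F_def by (rule integral_deriv_at[OF cg]) (use e in \<open>auto simp: b_def\<close>)
    then have dF: "((\<lambda>y. F y - F c) has_real_derivative g x) (at x)"
      by (auto intro!: derivative_eq_intros)
    have eqG: "\<Gamma> y = F y - F c" if y: "y \<in> {e<..<b}" for y
    proof -
      have ig: "g integrable_on {e..z}" for z
        by (rule integrable_continuous_interval, rule con_on[OF e(1) contg])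
      show ?thesis
      proof (cases "c \<le> y")
        case True
        have "integral {e..c} g + integral {c..y} g = integral {e..y} g"
          using e by (intro Henstock_Kurzweil_Integration.integral_combine[OF _ True ig]) auto
        then show ?thesis using True by (simp add: \<Gamma>_def oint_def F_def)
      next
        case False
        have "integral {e..y} g + integral {y..c} g = integral {e..c} g"
          using e y False by (intro Henstock_Kurzweil_Integration.integral_combine[OF _ _ ig]) auto
        then show ?thesis using False by (simp add: \<Gamma>_def oint_def F_def)
      qed
    qed
    show ?thesis
    proof (rule has_field_derivative_transform_within_open[OF dF, where S="{e<..<b}"])
      show "open {e<..<b}" by simp
      show "x \<in> {e<..<b}" using e by (simp add: b_def)
      show "F y - F c = \<Gamma> y" if "y \<in> {e<..<b}" for y using eqG[OF that] by simp
    qed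
  qed
  define RR where "RR x = b2 * (R x * cos (2 * \<Gamma> x)) + b3 * (R x * sin (2 * \<Gamma> x))" for x
  define H where "H x = b2 / 2 * (R x * R x * sin (2 * \<Gamma> x)) - b3 / 2 * (R x * R x * cos (2 * \<Gamma> x))" for x
  define E where "E x = R x * Q x * (b2 * sin (2 * \<Gamma> x) - b3 * cos (2 * \<Gamma> x))" for x
  have contRR: "isCont RR x" if "x > 0" for x
    unfolding RR_def using contR[OF that] DERIV_isCont[OF d\<Gamma>[OF that]]
    by (auto intro!: continuous_intros)
  have dH: "(H has_real_derivative RR x - E x) (at x)" if x: "x > 0" for x
  proof -
    have dR': "(R has_real_derivative - Q x) (at x)" using dR x by auto
    have dG': "(\<Gamma> has_real_derivative g x) (at x)" using d\<Gamma> x by auto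
    have dS: "((\<lambda>y. sin (2 * \<Gamma> y)) has_real_derivative cos (2 * \<Gamma> x) * (2 * g x)) (at x)"
      using DERIV_chain2[OF DERIV_sin DERIV_cmult[OF dG', of 2]] by simp
    have dC: "((\<lambda>y. cos (2 * \<Gamma> y)) has_real_derivative - sin (2 * \<Gamma> x) * (2 * g x)) (at x)"
      using DERIV_chain2[OF DERIV_cos DERIV_cmult[OF dG', of 2]] by simp
    note dRR = DERIV_mult[OF dR' dR']
    note dH0 = DERIV_diff[OF DERIV_cmult[OF DERIV_mult[OF dRR dS], of "b2/2"]
                             DERIV_cmult[OF DERIV_mult[OF dRR dC], of "b3/2"]]
    have Rnz: "R x \<noteq> 0" using Rpos x by auto
    show ?thesis unfolding H_def
      by (rule DERIV_cong[OF dH0]) (use Rnz in \<open>simp add: RR_def E_def g_def field_simps\<close>)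
  qed
  define D where "D N = integral {x0..N} R" for N
  define I where "I N = integral {x0..N} RR" for N
  have dD: "(D has_real_derivative R N) (at N)" if "N > x0" for N
    unfolding D_def by (rule integral_deriv_at[OF con_on[OF x0 contR], of _ "N+1"]) (use that in auto)
  have dI: "(I has_real_derivative RR N) (at N)" if "N > x0" for N
    unfolding I_def by (rule integral_deriv_at[OF con_on[OF x0 contRR], of _ "N+1"]) (use that in auto)
  have "eventually (\<lambda>y. R y > r/2) at_top" using order_tendstoD(1)[OF lR, of "r/2"] r by simp
  then obtain M where M: "\<And>y. y \<ge> M \<Longrightarrow> R y > r/2" by (auto simp: eventually_at_top_linorder)
  define M' where "M' = max M x0"
  have Dlow: "D N \<ge> r/2 * (N - M')" if N: "N \<ge> M'" for N
  proof -
    have iR: "R integrable_on {x0..N}"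
      by (rule integrable_continuous_interval, rule con_on[OF x0 contR])
    have "integral {x0..M'} R + integral {M'..N} R = integral {x0..N} R"
      using N iR by (intro Henstock_Kurzweil_Integration.integral_combine) (auto simp: M'_def)
    moreover have "integral {x0..M'} R \<ge> 0"
      using Rpos x0 by (intro integral_nonneg integrable_continuous_interval con_on[OF x0 contR])
        (auto intro: less_imp_le)
    moreover have "integral {M'..N} R \<ge> integral {M'..N} (\<lambda>_. r/2)"
      using M x0 by (intro integral_le integrable_continuous_interval con_on[OF _ contR])
         (auto simp: M'_def less_imp_le)
    moreover have "integral {M'..N} (\<lambda>_. r/2) = r/2 * (N - M')" using N by simp
    ultimately show ?thesis unfolding D_def by linarith
  qed
  have Dtop: "filterlim D at_top at_top"
  proof (rule filterlim_at_top_mono)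
    show "filterlim (\<lambda>N. r/2 * (N - M')) at_top at_top" using r by real_asymp
    show "eventually (\<lambda>N. r/2 * (N - M') \<le> D N) at_top"
      using eventually_ge_at_top[of M'] by eventually_elim (rule Dlow)
  qed
  have lim1: "((\<lambda>N. (I N - H N) / D N) \<longlongrightarrow> 0) at_top"
  proof (rule lhospital_at_top_at_top[OF Dtop])
    show "eventually (\<lambda>N. R N \<noteq> 0) at_top"
      using eventually_gt_at_top[of 0] by eventually_elim (use Rpos in auto)
    show "eventually (\<lambda>N. ((\<lambda>N. I N - H N) has_real_derivative E N) (at N)) at_top"
      using eventually_gt_at_top[of x0]
    proof eventually_elim
      case (elim N)
      have "((\<lambda>N. I N - H N) has_real_derivative RR N - (RR N - E N)) (at N)"
        using dI[OF elim] dH[of N] elim x0 by (auto intro!: derivative_eq_intros)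
      then show ?case by simp
    qed
    show "eventually (\<lambda>N. (D has_real_derivative R N) (at N)) at_top"
      using eventually_gt_at_top[of x0] by eventually_elim (rule dD)
    show "((\<lambda>N. E N / R N) \<longlongrightarrow> 0) at_top"
    proof (rule tendsto_0_le[OF lQ, where K="\<bar>b2\<bar> + \<bar>b3\<bar>"])
      show "eventually (\<lambda>N. norm (E N / R N) \<le> norm (Q N) * (\<bar>b2\<bar> + \<bar>b3\<bar>)) at_top"
        using eventually_gt_at_top[of 0]
      proof eventually_elim
        case (elim N)
        then have "R N \<noteq> 0" using Rpos by auto
        then have "E N / R N = Q N * (b2 * sin (2 * \<Gamma> N) - b3 * cos (2 * \<Gamma> N))"
          by (simp add: E_def)
        then show ?case
          by (simp add: abs_mult mult_left_mono bnd_sc)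
      qed
    qed
  qed
  have lim2: "((\<lambda>N. H N / D N) \<longlongrightarrow> 0) at_top"
  proof (rule tendsto_0_le[OF tendsto_inverse_0_at_top[OF Dtop], where K="(\<bar>b2\<bar> + \<bar>b3\<bar>) * (r+1)^2"])
    have "eventually (\<lambda>y. R y < r + 1) at_top" using order_tendstoD(2)[OF lR, of "r+1"] by simp
    then show "eventually (\<lambda>N. norm (H N / D N) \<le> norm (inverse (D N)) * ((\<bar>b2\<bar> + \<bar>b3\<bar>) * (r+1)^2)) at_top"
      using eventually_gt_at_top[of 0]
    proof eventually_elim
      case (elim N)
      have R0: "0 < R N" using Rpos elim by auto
      have sq: "(R N)\<^sup>2 \<le> (r+1)^2" using R0 elim by (intro power_mono) auto
      have "\<bar>H N\<bar> \<le> \<bar>b2 / 2 * (R N * R N * sin (2 * \<Gamma> N))\<bar> + \<bar>b3 / 2 * (R N * R N * cos (2 * \<Gamma> N))\<bar>"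
        unfolding H_def by linarith
      also have "\<dots> = (R N)\<^sup>2 / 2 * (\<bar>b2 * sin (2 * \<Gamma> N)\<bar> + \<bar>b3 * cos (2 * \<Gamma> N)\<bar>)"
        using R0 by (simp add: abs_mult algebra_simps power2_eq_square)
      also have "\<dots> \<le> (R N)\<^sup>2 / 2 * (\<bar>b2\<bar> + \<bar>b3\<bar>)"
        by (intro mult_left_mono bnd_sc2) auto
      also have "\<dots> \<le> (\<bar>b2\<bar> + \<bar>b3\<bar>) * (r+1)^2"
      proof -
        have k: "0 \<le> \<bar>b2\<bar> + \<bar>b3\<bar>" by simp
        have "(\<bar>b2\<bar> + \<bar>b3\<bar>) * (R N)\<^sup>2 \<le> (\<bar>b2\<bar> + \<bar>b3\<bar>) * (r+1)^2"
          by (rule mult_left_mono[OF sq k])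
        moreover have "0 \<le> (\<bar>b2\<bar> + \<bar>b3\<bar>) * (r+1)^2" by simp
        moreover have "(R N)\<^sup>2 / 2 * (\<bar>b2\<bar> + \<bar>b3\<bar>) = ((\<bar>b2\<bar> + \<bar>b3\<bar>) * (R N)\<^sup>2) / 2"
          by (simp add: mult.commute)
        ultimately show ?thesis by linarith
      qed
      finally have "\<bar>H N\<bar> \<le> (\<bar>b2\<bar> + \<bar>b3\<bar>) * (r+1)^2" .
      then have "inverse \<bar>D N\<bar> * \<bar>H N\<bar> \<le> inverse \<bar>D N\<bar> * ((\<bar>b2\<bar> + \<bar>b3\<bar>) * (r+1)^2)"
        by (rule mult_left_mono) simp
      then show ?case
        by (simp add: divide_inverse abs_mult mult.commute)
    qed
  qed
  have "((\<lambda>N. (I N - H N) / D N + H N / D N) \<longlongrightarrow> 0 + 0) at_top"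
    by (rule tendsto_add[OF lim1 lim2])
  moreover have "(\<lambda>N. (I N - H N) / D N + H N / D N) = (\<lambda>N. I N / D N)"
    by (simp add: fun_eq_iff diff_divide_distrib)
  ultimately show ?thesis
    by (simp add: I_def D_def RR_def[abs_def] \<Gamma>_def[abs_def] g_def[abs_def])
qed

theorem lemma3:
  fixes qc :: "nat \<Rightarrow> real" and q :: "real \<Rightarrow> real"
    and P1 Q1 R1 :: "real \<Rightarrow> real \<Rightarrow> real"
    and A :: real and u du v dv :: "real \<Rightarrow> real \<Rightarrow> real"
  assumes q_series: "\<forall>x>0. summable (\<lambda>n. qc (n + 2) * x ^ n)"
    and q_def: "\<forall>x>0. q x = qc 0 / x\<^sup>2 + qc 1 / x + (\<Sum>n. qc (n + 2) * x ^ n)"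
    and q0: "qc 0 \<ge> - 1 / 4"
    and q01: "qc 0 \<noteq> 0 \<or> qc 1 \<noteq> 0"
    and q_inf: "\<exists>x0>0. q absolutely_integrable_on {x0..} \<or>
        (\<exists>q'. (\<forall>x\<ge>x0. (q has_real_derivative q' x) (at x)) \<and>
              q' absolutely_integrable_on {x0..} \<and> (q \<longlongrightarrow> 0) at_top)"
    and appell_P: "\<forall>lam>0. \<forall>x>0. (P1 lam has_real_derivative (lam - q x) * Q1 lam x) (at x)"
    and appell_Q: "\<forall>lam>0. \<forall>x>0. (Q1 lam has_real_derivative
                      (- 2 * P1 lam x + 2 * (lam - q x) * R1 lam x)) (at x)"
    and appell_R: "\<forall>lam>0. \<forall>x>0. (R1 lam has_real_derivative - Q1 lam x) (at x)"
    and lim_P: "\<forall>lam>0. (P1 lam \<longlongrightarrow> sqrt lam) at_top"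
    and lim_Q: "\<forall>lam>0. (Q1 lam \<longlongrightarrow> 0) at_top"
    and lim_R: "\<forall>lam>0. (R1 lam \<longlongrightarrow> 1 / sqrt lam) at_top"
    and A_pos: "A > 0"
    and u_ode: "\<forall>lam>0. \<forall>x>0. (u lam has_real_derivative du lam x) (at x) \<and>
                 (du lam has_real_derivative (q x - lam) * u lam x) (at x)"
    and v_ode: "\<forall>lam>0. \<forall>x>0. (v lam has_real_derivative dv lam x) (at x) \<and>
                 (dv lam has_real_derivative (q x - lam) * v lam x) (at x)"
    and u_init: "\<forall>lam>0. u lam A = 1 \<and> du lam A = 0"
    and v_init: "\<forall>lam>0. v lam A = 0 \<and> dv lam A = 1"
  shows "(\<forall>lam>0. \<forall>c>0. \<forall>\<beta>2 \<beta>3 :: real. \<forall>x0>0.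
            let \<gamma> = (\<lambda>x. oint c x (\<lambda>t. 1 / R1 lam t));
                R = (\<lambda>x. \<beta>2 * (R1 lam x * cos (2 * \<gamma> x)) + \<beta>3 * (R1 lam x * sin (2 * \<gamma> x)))
            in ((\<lambda>N. integral {x0..N} R / integral {x0..N} (R1 lam)) \<longlongrightarrow> 0) at_top)
       \<and> (\<forall>a b cf :: real \<Rightarrow> real.
            (\<forall>lam>0. \<forall>x>0.
                P1 lam x = a lam * (du lam x)\<^sup>2 + b lam * (du lam x * dv lam x)
                           + cf lam * (dv lam x)\<^sup>2
              \<and> Q1 lam x = a lam * (- 2 * u lam x * du lam x)
                           + b lam * (- (u lam x * dv lam x + du lam x * v lam x))
                           + cf lam * (- 2 * v lam x * dv lam x)
              \<and> R1 lam x = a lam * (u lam x)\<^sup>2 + b lam * (u lam x * v lam x)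
                           + cf lam * (v lam x)\<^sup>2)
            \<longrightarrow> (\<forall>lam>0. a lam > 0 \<and> cf lam > 0))"
proof -
  have facts: "\<forall>x>0. R1 lam x > 0 \<and> P1 lam x > 0" if lam: "lam > 0" for lam
  proof (rule appell_facts[of lam "P1 lam" q "Q1 lam" "R1 lam"])
    show "lam > 0" by (rule lam)
    show "\<forall>x>0. (P1 lam has_real_derivative (lam - q x) * Q1 lam x) (at x)"
      using appell_P lam by simp
    show "\<forall>x>0. (Q1 lam has_real_derivative (- 2 * P1 lam x + 2 * (lam - q x) * R1 lam x)) (at x)"
      using appell_Q lam by simp
    show "\<forall>x>0. (R1 lam has_real_derivative - Q1 lam x) (at x)" using appell_R lam by simp
    show "(P1 lam \<longlongrightarrow> sqrt lam) at_top" using lim_P lam by simp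
    show "(Q1 lam \<longlongrightarrow> 0) at_top" using lim_Q lam by simp
    show "(R1 lam \<longlongrightarrow> 1 / sqrt lam) at_top" using lim_R lam by simp
  qed
  show ?thesis
  proof (intro conjI allI impI)
    fix lam c b2 b3 x0 :: real
    assume lam: "lam > 0" and c: "c > 0" and x0: "x0 > 0"
    show "let \<gamma> = (\<lambda>x. oint c x (\<lambda>t. 1 / R1 lam t));
                R = (\<lambda>x. b2 * (R1 lam x * cos (2 * \<gamma> x)) + b3 * (R1 lam x * sin (2 * \<gamma> x)))
            in ((\<lambda>N. integral {x0..N} R / integral {x0..N} (R1 lam)) \<longlongrightarrow> 0) at_top"
      unfolding Let_def
    proof (rule part_i[of "R1 lam" "Q1 lam" "1 / sqrt lam"])
      show "\<forall>x>0. R1 lam x > 0" using facts[OF lam] by simp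
      show "\<forall>x>0. (R1 lam has_real_derivative - Q1 lam x) (at x)" using appell_R lam by simp
      show "(R1 lam \<longlongrightarrow> 1 / sqrt lam) at_top" using lim_R lam by simp
      show "(Q1 lam \<longlongrightarrow> 0) at_top" using lim_Q lam by simp
    qed (use lam c x0 in auto)
  next
    fix a b cf :: "real \<Rightarrow> real" and lam :: real
    assume rep: "\<forall>lam>0. \<forall>x>0.
                P1 lam x = a lam * (du lam x)\<^sup>2 + b lam * (du lam x * dv lam x)
                           + cf lam * (dv lam x)\<^sup>2
              \<and> Q1 lam x = a lam * (- 2 * u lam x * du lam x)
                           + b lam * (- (u lam x * dv lam x + du lam x * v lam x))
                           + cf lam * (- 2 * v lam x * dv lam x)
              \<and> R1 lam x = a lam * (u lam x)\<^sup>2 + b lam * (u lam x * v lam x)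
                           + cf lam * (v lam x)\<^sup>2"
      and lam: "lam > 0"
    have r: "P1 lam A = a lam * (du lam A)\<^sup>2 + b lam * (du lam A * dv lam A) + cf lam * (dv lam A)\<^sup>2"
      "R1 lam A = a lam * (u lam A)\<^sup>2 + b lam * (u lam A * v lam A) + cf lam * (v lam A)\<^sup>2"
      using rep[rule_format, OF lam A_pos] by simp_all
    have i: "u lam A = 1" "du lam A = 0" "v lam A = 0" "dv lam A = 1"
      using u_init v_init lam by auto
    have "P1 lam A = cf lam" "R1 lam A = a lam" using r i by simp_all
    then show "a lam > 0" "cf lam > 0" using facts[OF lam, rule_format, OF A_pos] by simp_all
  qed
qed

end
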